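(* Let $\mathbb{K}$ be a field of characteristic not $2$, $E$ an $n$-dimensional $\mathbb{K}$-vector space and $\mathcal{V}$ a linear subspace of $\mathcal{L}(E)$. Suppose either (a) $n\geq 3$ and every $u\in\mathcal{V}$ has at most two distinct eigenvalues in $\mathbb{K}$, or (b) $n\geq 2$ and every $u\in\mathcal{V}$ has at most one nonzero eigenvalue in $\mathbb{K}$. Then there exists a $\mathcal{V}$-good vector in $E$.
   Context: A nonzero vector $x\in E$ is $\mathcal{V}$-good if there is no $u\in\mathcal{V}$ with $\operatorname{im}u=\mathbb{K}x$ and $\operatorname{tr}(u)=0$. *)

theory Defs
  imports "Jordan_Normal_Form.Char_Poly"
begin

text \<open>E = K^n (column vectors of length n), L(E) = n x n matrices over K.\<close>

definition mat_trace :: "'a::comm_ring_1 mat \<Rightarrow> 'a" where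
  "mat_trace A = (\<Sum>i<dim_row A. A $$ (i, i))"

definition lin_subspace_mat :: "nat \<Rightarrow> 'a::field mat set \<Rightarrow> bool" where
  "lin_subspace_mat n V \<longleftrightarrow> V \<subseteq> carrier_mat n n \<and> 0\<^sub>m n n \<in> V \<and>
     (\<forall>A\<in>V. \<forall>B\<in>V. A + B \<in> V) \<and> (\<forall>c. \<forall>A\<in>V. c \<cdot>\<^sub>m A \<in> V)"

definition mat_image :: "nat \<Rightarrow> 'a::field mat \<Rightarrow> 'a vec set" where
  "mat_image n u = {u *\<^sub>v y | y. y \<in> carrier_vec n}"

definition good_vector :: "nat \<Rightarrow> 'a::field mat set \<Rightarrow> 'a vec \<Rightarrow> bool" where
  "good_vector n V x \<longleftrightarrow> x \<in> carrier_vec n \<and> x \<noteq> 0\<^sub>v n \<and>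
     \<not> (\<exists>u\<in>V. mat_image n u = {c \<cdot>\<^sub>v x | c. True} \<and> mat_trace u = 0)"

end

theory Submission
  imports Defs
begin

lemma mv_unit: assumes "(u::'a::field mat) \<in> carrier_mat n n" "i < n" "j < n"
  shows "(u *\<^sub>v unit_vec n j) $ i = u $$ (i,j)"
  using assms by (simp add: scalar_prod_right_unit)

lemma decomp:
  fixes u :: "'a::field mat"
  assumes u: "u \<in> carrier_mat n n" and x: "x \<in> carrier_vec n" "x \<noteq> 0\<^sub>v n"
    and im: "mat_image n u = {c \<cdot>\<^sub>v x | c. True}" and tr: "mat_trace u = 0"
  shows "\<exists>f\<in>carrier_vec n. (\<forall>v\<in>carrier_vec n. u *\<^sub>v v = (f \<bullet> v) \<cdot>\<^sub>v x) \<and> f \<bullet> x = 0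
     \<and> (\<exists>y\<in>carrier_vec n. f \<bullet> y = 1)"
proof -
  have col: "\<exists>c. u *\<^sub>v unit_vec n j = c \<cdot>\<^sub>v x" if "j < n" for j
  proof -
    have "u *\<^sub>v unit_vec n j \<in> mat_image n u" unfolding mat_image_def by auto
    then show ?thesis using im by auto
  qed
  define f where "f = vec n (\<lambda>j. SOME c. u *\<^sub>v unit_vec n j = c \<cdot>\<^sub>v x)"
  have fj: "u *\<^sub>v unit_vec n j = f $ j \<cdot>\<^sub>v x" if "j < n" for j
    using someI_ex[OF col[OF that]] that unfolding f_def by simp
  have ent: "u $$ (i,j) = f $ j * x $ i" if "i < n" "j < n" for i j
  proof -
    have "u $$ (i,j) = (u *\<^sub>v unit_vec n j) $ i" using mv_unit[OF u that] by simp
    also have "\<dots> = f $ j * x $ i" using fj[OF that(2)] that x by simp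
    finally show ?thesis .
  qed
  have fc: "f \<in> carrier_vec n" unfolding f_def by simp
  have ueq: "u *\<^sub>v v = (f \<bullet> v) \<cdot>\<^sub>v x" if v: "v \<in> carrier_vec n" for v
  proof (rule eq_vecI)
    show "dim_vec (u *\<^sub>v v) = dim_vec ((f \<bullet> v) \<cdot>\<^sub>v x)" using u x by simp
    fix i assume "i < dim_vec ((f \<bullet> v) \<cdot>\<^sub>v x)"
    then have i: "i < n" using x by simp
    have "(u *\<^sub>v v) $ i = (\<Sum>j<n. u $$ (i,j) * v $ j)"
      using u v i by (simp add: scalar_prod_def lessThan_atLeast0 row_def)
    also have "\<dots> = (\<Sum>j<n. x $ i * (f $ j * v $ j))"
      by (rule sum.cong, auto simp: ent[OF i])
    also have "\<dots> = x $ i * (f \<bullet> v)"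
      using v by (simp add: scalar_prod_def lessThan_atLeast0 sum_distrib_left)
    finally show "(u *\<^sub>v v) $ i = ((f \<bullet> v) \<cdot>\<^sub>v x) $ i" using i x by simp
  qed
  have "mat_trace u = (\<Sum>i<n. f $ i * x $ i)"
    unfolding mat_trace_def using u by (auto intro!: sum.cong simp: ent)
  then have fx: "f \<bullet> x = 0" using tr x by (simp add: scalar_prod_def lessThan_atLeast0)
  have "x \<in> mat_image n u" using im by (auto intro!: exI[of _ 1])
  then obtain y where y: "y \<in> carrier_vec n" "u *\<^sub>v y = x" unfolding mat_image_def by auto
  then have e: "(f \<bullet> y) \<cdot>\<^sub>v x = x" using ueq by simp
  obtain i where i: "i < n" "x $ i \<noteq> 0" using x by (metis eq_vecI carrier_vecD index_zero_vec(1,2))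
  have "(f \<bullet> y) * x $ i = x $ i" using arg_cong[OF e, of "\<lambda>w. w $ i"] i x by simp
  then have "f \<bullet> y = 1" using i by simp
  then show ?thesis using fc ueq fx y by blast
qed

lemma fin_eig: assumes "(A::'a::field mat) \<in> carrier_mat n n" shows "finite {k. eigenvalue A k}"
proof -
  have "char_poly A \<noteq> 0" using degree_monic_char_poly[OF assms] by (metis coeff_0 zero_neq_one)
  then show ?thesis using poly_roots_finite eigenvalue_root_char_poly[OF assms] by simp
qed

lemma kern:
  fixes f g :: "'a::field vec"
  assumes n: "n \<ge> 3" and f: "f \<in> carrier_vec n" and g: "g \<in> carrier_vec n"
  shows "\<exists>v\<in>carrier_vec n. v \<noteq> 0\<^sub>v n \<and> f \<bullet> v = 0 \<and> g \<bullet> v = 0"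
proof -
  define H where "H = mat n n (\<lambda>(i,j). if i = 0 then f $ j else if i = 1 then g $ j else (0::'a))"
  have Hc: "H \<in> carrier_mat n n" unfolding H_def by simp
  have Tc: "transpose_mat H \<in> carrier_mat n n" using Hc by simp
  have "transpose_mat H *\<^sub>v unit_vec n 2 = 0\<^sub>v n"
  proof (rule eq_vecI)
    fix j assume "j < dim_vec (0\<^sub>v n :: 'a vec)"
    then have j: "j < n" by simp
    have "(transpose_mat H *\<^sub>v unit_vec n 2) $ j = transpose_mat H $$ (j,2)"
      using mv_unit[OF Tc j] n by simp
    also have "\<dots> = 0" using j n unfolding H_def by simp
    finally show "(transpose_mat H *\<^sub>v unit_vec n 2) $ j = 0\<^sub>v n $ j" using j by simp
  qed (use Tc in simp)
  have "det (transpose_mat H) = 0"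
  proof -
    have "unit_vec n 2 \<noteq> (0\<^sub>v n :: 'a vec)" using n by (intro unit_vec_nonzero) auto
    then show ?thesis using det_0_iff_vec_prod_zero[OF Tc] \<open>transpose_mat H *\<^sub>v unit_vec n 2 = 0\<^sub>v n\<close>
      using unit_vec_carrier by blast
  qed
  then have "det H = 0" using det_transpose[OF Hc] by simp
  then obtain v where v: "v \<in> carrier_vec n" "v \<noteq> 0\<^sub>v n" "H *\<^sub>v v = 0\<^sub>v n"
    using det_0_iff_vec_prod_zero[OF Hc] by blast
  have r: "(H *\<^sub>v v) $ i = (\<Sum>j<n. H $$ (i,j) * v $ j)" if "i < n" for i
    using that Hc v(1) by (simp add: scalar_prod_def lessThan_atLeast0 row_def)
  have "f \<bullet> v = (\<Sum>j<n. H $$ (0,j) * v $ j)" using n f v(1)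
    by (simp add: scalar_prod_def lessThan_atLeast0 H_def)
  then have "f \<bullet> v = (H *\<^sub>v v) $ 0" using r[of 0] n by simp
  moreover have "g \<bullet> v = (\<Sum>j<n. H $$ (1,j) * v $ j)" using n g v(1)
    by (simp add: scalar_prod_def lessThan_atLeast0 H_def)
  then have "g \<bullet> v = (H *\<^sub>v v) $ 1" using r[of 1] n by simp
  ultimately show ?thesis using v n by auto
qed

lemma pair:
  fixes V :: "'a::field mat set"
  assumes char: "(2::'a) \<noteq> 0"
    and V: "lin_subspace_mat n V"
    and hyp: "(n \<ge> 3 \<and> (\<forall>u\<in>V. card {k. eigenvalue u k} \<le> 2)) \<or>
              (n \<ge> 2 \<and> (\<forall>u\<in>V. card {k. eigenvalue u k \<and> k \<noteq> 0} \<le> 1))"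
    and x: "x \<in> carrier_vec n" and y: "y \<in> carrier_vec n"
    and f: "f \<in> carrier_vec n" and g: "g \<in> carrier_vec n"
    and u: "u \<in> V" and w: "w \<in> V"
    and ueq: "\<forall>v\<in>carrier_vec n. u *\<^sub>v v = (f \<bullet> v) \<cdot>\<^sub>v x"
    and weq: "\<forall>v\<in>carrier_vec n. w *\<^sub>v v = (g \<bullet> v) \<cdot>\<^sub>v y"
    and fx: "f \<bullet> x = 0" and gy: "g \<bullet> y = 0"
    and fy: "f \<bullet> y \<noteq> 0" and gx: "g \<bullet> x \<noteq> 0"
  shows False
proof -
  define s where "s = f \<bullet> y"
  define t where "t = g \<bullet> x"
  define A where "A = (s * t) \<cdot>\<^sub>m u + w"
  have VC: "V \<subseteq> carrier_mat n n" using V unfolding lin_subspace_mat_def by blast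
  have uc: "u \<in> carrier_mat n n" and wc: "w \<in> carrier_mat n n" using u w VC by auto
  have AV: "A \<in> V" using V u w unfolding lin_subspace_mat_def A_def by blast
  have Ac: "A \<in> carrier_mat n n" using AV VC by auto
  have Aeq: "A *\<^sub>v v = (s * t * (f \<bullet> v)) \<cdot>\<^sub>v x + (g \<bullet> v) \<cdot>\<^sub>v y" if v: "v \<in> carrier_vec n" for v
  proof (rule eq_vecI)
    fix i assume "i < dim_vec ((s * t * (f \<bullet> v)) \<cdot>\<^sub>v x + (g \<bullet> v) \<cdot>\<^sub>v y)"
    then have i: "i < n" using y by simp
    have "(A *\<^sub>v v) $ i = (s * t) * (u *\<^sub>v v) $ i + (w *\<^sub>v v) $ i"
      unfolding A_def using uc wc i v by (simp add: add_scalar_prod_distrib[of _ n])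
    also have "\<dots> = ((s * t * (f \<bullet> v)) \<cdot>\<^sub>v x + (g \<bullet> v) \<cdot>\<^sub>v y) $ i"
      using ueq weq v i x y by simp
    finally show "(A *\<^sub>v v) $ i = ((s * t * (f \<bullet> v)) \<cdot>\<^sub>v x + (g \<bullet> v) \<cdot>\<^sub>v y) $ i" .
  qed (use Ac x y in simp)
  have s0: "s \<noteq> 0" and t0: "t \<noteq> 0" using fy gx s_def t_def by auto
  define e1 where "e1 = s \<cdot>\<^sub>v x + y"
  define e2 where "e2 = s \<cdot>\<^sub>v x + (-1) \<cdot>\<^sub>v y"
  have e1c: "e1 \<in> carrier_vec n" and e2c: "e2 \<in> carrier_vec n" using x y unfolding e1_def e2_def by auto
  have fe1: "f \<bullet> e1 = s" unfolding e1_def using f x y fx s_def by (simp add: scalar_prod_add_distrib[of _ n])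
  have ge1: "g \<bullet> e1 = s * t" unfolding e1_def using g x y gy t_def by (simp add: scalar_prod_add_distrib[of _ n])
  have fe2: "f \<bullet> e2 = - s" unfolding e2_def using f x y fx s_def by (simp add: scalar_prod_add_distrib[of _ n])
  have ge2: "g \<bullet> e2 = s * t" unfolding e2_def using g x y gy t_def by (simp add: scalar_prod_add_distrib[of _ n])
  have e1n: "e1 \<noteq> 0\<^sub>v n" using fe1 s0 f by auto
  have e2n: "e2 \<noteq> 0\<^sub>v n" using fe2 s0 f by auto
  have "A *\<^sub>v e1 = (s * t) \<cdot>\<^sub>v e1"
    unfolding Aeq[OF e1c] fe1 ge1 unfolding e1_def using x y
    by (intro eq_vecI) (auto simp: algebra_simps)
  then have ev1: "eigenvalue A (s * t)" unfolding eigenvalue_def eigenvector_def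
    using Ac e1c e1n by auto
  have "A *\<^sub>v e2 = (- (s * t)) \<cdot>\<^sub>v e2"
    unfolding Aeq[OF e2c] fe2 ge2 unfolding e2_def using x y
    by (intro eq_vecI) (auto simp: algebra_simps)
  then have ev2: "eigenvalue A (- (s * t))" unfolding eigenvalue_def eigenvector_def
    using Ac e2c e2n by auto
  have st0: "s * t \<noteq> 0" using s0 t0 by simp
  have dist: "s * t \<noteq> - (s * t)"
  proof
    assume "s * t = - (s * t)"
    then have "s * t + s * t = 0" by (metis add.right_inverse)
    then have "2 * (s * t) = 0" by (metis mult_2)
    then show False using char st0 by simp
  qed
  have fin: "finite {k. eigenvalue A k}" using fin_eig[OF Ac] .
  from hyp show False
  proof
    assume h: "n \<ge> 3 \<and> (\<forall>u\<in>V. card {k. eigenvalue u k} \<le> 2)"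
    obtain z where z: "z \<in> carrier_vec n" "z \<noteq> 0\<^sub>v n" "f \<bullet> z = 0" "g \<bullet> z = 0"
      using kern[OF _ f g] h by blast
    have "A *\<^sub>v z = 0 \<cdot>\<^sub>v z" unfolding Aeq[OF z(1)] z using x y z by (intro eq_vecI) auto
    then have ev0: "eigenvalue A 0" unfolding eigenvalue_def eigenvector_def
      using Ac z by auto
    have "{0, s * t, - (s * t)} \<subseteq> {k. eigenvalue A k}" using ev0 ev1 ev2 by auto
    then have "card {0, s * t, - (s * t)} \<le> card {k. eigenvalue A k}" using fin card_mono by blast
    moreover have "card {0, s * t, - (s * t)} = 3" using dist st0 by auto
    moreover have "card {k. eigenvalue A k} \<le> 2" using h AV by blast
    ultimately show False by linarith
  next
    assume h: "n \<ge> 2 \<and> (\<forall>u\<in>V. card {k. eigenvalue u k \<and> k \<noteq> 0} \<le> 1)"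
    have "{s * t, - (s * t)} \<subseteq> {k. eigenvalue A k \<and> k \<noteq> 0}" using ev1 ev2 st0 by auto
    moreover have "finite {k. eigenvalue A k \<and> k \<noteq> 0}" using fin by simp
    ultimately have "card {s * t, - (s * t)} \<le> card {k. eigenvalue A k \<and> k \<noteq> 0}" using card_mono by blast
    moreover have "card {s * t, - (s * t)} = 2" using dist by auto
    moreover have "card {k. eigenvalue A k \<and> k \<noteq> 0} \<le> 1" using h AV by blast
    ultimately show False by linarith
  qed
qed

lemma down:
  fixes g z :: "nat \<Rightarrow> 'a::field vec"
  assumes gc: "\<forall>i\<le>k. g i \<in> carrier_vec n" and zc: "\<forall>i\<le>k. z i \<in> carrier_vec n"
   and tri: "\<forall>i\<le>k. \<forall>j\<le>i. g i \<bullet> z j = 0" and sup: "\<forall>i<k. g i \<bullet> z (Suc i) = 1"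
   and y: "y \<in> carrier_vec n" "g k \<bullet> y = 1"
  shows "\<exists>v\<in>carrier_vec n. \<forall>i\<le>k. g i \<bullet> v = 1"
proof -
  have "\<exists>v\<in>carrier_vec n. \<forall>i. k - d \<le> i \<and> i \<le> k \<longrightarrow> g i \<bullet> v = 1" if "d \<le> k" for d
    using that
  proof (induction d)
    case 0 then show ?case using y by (intro bexI[of _ y]) auto
  next
    case (Suc d)
    then obtain v where v: "v \<in> carrier_vec n" "\<forall>i. k - d \<le> i \<and> i \<le> k \<longrightarrow> g i \<bullet> v = 1" by auto
    define m where "m = k - d"
    have m1: "m \<ge> 1" "m \<le> k" using Suc.prems m_def by auto
    define c where "c = 1 - g (m-1) \<bullet> v"
    define v' where "v' = v + c \<cdot>\<^sub>v z m"
    have zm: "z m \<in> carrier_vec n" using zc m1 by auto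
    have v'c: "v' \<in> carrier_vec n" using v zm v'_def by auto
    have gv': "g i \<bullet> v' = g i \<bullet> v + c * (g i \<bullet> z m)" if "i \<le> k" for i
      unfolding v'_def using gc that v zm by (simp add: scalar_prod_add_distrib[of _ n])
    show ?case
    proof (intro bexI[of _ v'] allI impI)
      fix i assume i: "k - Suc d \<le> i \<and> i \<le> k"
      show "g i \<bullet> v' = 1"
      proof (cases "m \<le> i")
        case True
        then have "g i \<bullet> z m = 0" using tri i by auto
        then show ?thesis using gv'[of i] i v True m_def by auto
      next
        case False
        then have im: "i = m - 1" using i m_def by auto
        have "g i \<bullet> z m = 1" using sup im m1 by (metis Suc_diff_1 Suc_le_eq less_one not_le le_less_trans diff_less zero_less_one)
        then show ?thesis using gv'[of i] i c_def im by simp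
      qed
    qed (rule v'c)
  qed
  from this[of k] show ?thesis by auto
qed

lemma chain_contra:
  fixes fs xs :: "nat \<Rightarrow> 'a::field vec"
  assumes n: "n \<ge> 1" and fc: "\<forall>i<n. fs i \<in> carrier_vec n" and xc: "\<forall>i<n. xs i \<in> carrier_vec n"
    and x0: "xs 0 \<noteq> 0\<^sub>v n"
    and tri: "\<forall>i<n. \<forall>j\<le>i. fs i \<bullet> xs j = 0" and sup: "\<forall>i. Suc i < n \<longrightarrow> fs i \<bullet> xs (Suc i) = 1"
    and ex: "\<forall>i<n. \<exists>w\<in>carrier_vec n. fs i \<bullet> w = 1"
  shows False
proof -
  define G where "G = mat n n (\<lambda>(i,j). fs i $ j)"
  have Gc: "G \<in> carrier_mat n n" unfolding G_def by simp
  have Tc: "transpose_mat G \<in> carrier_mat n n" using Gc by simp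
  have rowG: "row G i = fs i" if "i < n" for i
    by (rule eq_vecI) (use fc that in \<open>auto simp: G_def\<close>)
  have x0c: "xs 0 \<in> carrier_vec n" using xc n by auto
  have "G *\<^sub>v xs 0 = 0\<^sub>v n"
  proof (rule eq_vecI)
    fix i assume "i < dim_vec (0\<^sub>v n :: 'a vec)"
    then have i: "i < n" by simp
    have "(G *\<^sub>v xs 0) $ i = fs i \<bullet> xs 0" using Gc i rowG by simp
    then show "(G *\<^sub>v xs 0) $ i = 0\<^sub>v n $ i" using tri i by simp
  qed (use Gc in simp)
  then have "det G = 0" using det_0_iff_vec_prod_zero[OF Gc] x0 x0c by blast
  then have "det (transpose_mat G) = 0" using det_transpose[OF Gc] by simp
  then obtain c where c: "c \<in> carrier_vec n" "c \<noteq> 0\<^sub>v n" "transpose_mat G *\<^sub>v c = 0\<^sub>v n"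
    using det_0_iff_vec_prod_zero[OF Tc] by blast
  have col0: "(\<Sum>i<n. fs i $ j * c $ i) = 0" if j: "j < n" for j
  proof -
    have "(transpose_mat G *\<^sub>v c) $ j = (\<Sum>i<n. fs i $ j * c $ i)"
      using j Tc c(1) by (simp add: scalar_prod_def lessThan_atLeast0 row_def G_def)
    then show ?thesis using c(3) j by simp
  qed
  have key: "(\<Sum>i<n. c $ i * (fs i \<bullet> w)) = 0" if w: "w \<in> carrier_vec n" for w
  proof -
    have "(\<Sum>i<n. c $ i * (fs i \<bullet> w)) = (\<Sum>i<n. \<Sum>j<n. c $ i * (fs i $ j * w $ j))"
      using w by (simp add: scalar_prod_def lessThan_atLeast0 sum_distrib_left)
    also have "\<dots> = (\<Sum>j<n. \<Sum>i<n. c $ i * (fs i $ j * w $ j))" by (rule sum.swap)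
    also have "\<dots> = (\<Sum>j<n. w $ j * (\<Sum>i<n. fs i $ j * c $ i))"
      by (simp add: sum_distrib_left mult_ac)
    also have "\<dots> = 0" using col0 by simp
    finally show ?thesis .
  qed
  have "\<exists>i. i < n \<and> c $ i \<noteq> 0"
  proof (rule ccontr)
    assume "\<not> ?thesis"
    then have "c = 0\<^sub>v n" using c(1) by (intro eq_vecI) auto
    then show False using c(2) by simp
  qed
  then obtain i1 where i1: "i1 < n" "c $ i1 \<noteq> 0" by blast
  define i0 where "i0 = (LEAST i. c $ i \<noteq> 0)"
  have i0: "i0 < n" "c $ i0 \<noteq> 0" "\<forall>i<i0. c $ i = 0"
  proof -
    show "c $ i0 \<noteq> 0" unfolding i0_def by (rule LeastI[of _ i1]) (rule i1(2))
    have "i0 \<le> i1" unfolding i0_def by (rule Least_le) (rule i1(2))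
    then show "i0 < n" using i1 by simp
    show "\<forall>i<i0. c $ i = 0" unfolding i0_def using not_less_Least by blast
  qed
  obtain w where w: "w \<in> carrier_vec n" "fs i0 \<bullet> w = 1" "\<forall>i<n. i0 < i \<longrightarrow> fs i \<bullet> w = 0"
  proof (cases "Suc i0 < n")
    case True
    then show ?thesis using that[of "xs (Suc i0)"] xc sup tri by auto
  next
    case False
    then obtain w where "w \<in> carrier_vec n" "fs i0 \<bullet> w = 1" using ex i0 by blast
    then show ?thesis using that[of w] False by auto
  qed
  have "(\<Sum>i<n. c $ i * (fs i \<bullet> w)) = c $ i0 * (fs i0 \<bullet> w) + (\<Sum>i\<in>{..<n} - {i0}. c $ i * (fs i \<bullet> w))"
    using i0 by (simp add: sum.remove)
  also have "(\<Sum>i\<in>{..<n} - {i0}. c $ i * (fs i \<bullet> w)) = 0"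
  proof (rule sum.neutral, intro ballI)
    fix i assume "i \<in> {..<n} - {i0}"
    then have "i < n" "i \<noteq> i0" by auto
    then show "c $ i * (fs i \<bullet> w) = 0" using i0 w by (cases "i < i0") auto
  qed
  finally have "(\<Sum>i<n. c $ i * (fs i \<bullet> w)) = c $ i0" using w by simp
  then show False using key[OF w(1)] i0 by simp
qed

theorem mainTheorem8:
  fixes n :: nat and V :: "'a::field mat set"
  assumes char: "(2::'a) \<noteq> 0"
    and V: "lin_subspace_mat n V"
    and hyp: "(n \<ge> 3 \<and> (\<forall>u\<in>V. card {k. eigenvalue u k} \<le> 2)) \<or>
              (n \<ge> 2 \<and> (\<forall>u\<in>V. card {k. eigenvalue u k \<and> k \<noteq> 0} \<le> 1))"
  shows "\<exists>x. good_vector n V x"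
proof (rule ccontr)
  assume nog: "\<not> (\<exists>x. good_vector n V x)"
  have VC: "V \<subseteq> carrier_mat n n" using V unfolding lin_subspace_mat_def by blast
  have n2: "n \<ge> 2" using hyp by auto
  let ?Q = "\<lambda>x (t :: 'a mat \<times> 'a vec \<times> 'a vec). fst t \<in> V \<and> fst (snd t) \<in> carrier_vec n
     \<and> snd (snd t) \<in> carrier_vec n
     \<and> (\<forall>v\<in>carrier_vec n. fst t *\<^sub>v v = (fst (snd t) \<bullet> v) \<cdot>\<^sub>v x)
     \<and> fst (snd t) \<bullet> x = 0 \<and> fst (snd t) \<bullet> snd (snd t) = 1"
  have "\<forall>x. \<exists>t. x \<in> carrier_vec n \<and> x \<noteq> 0\<^sub>v n \<longrightarrow> ?Q x t"
  proof
    fix x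
    show "\<exists>t. x \<in> carrier_vec n \<and> x \<noteq> 0\<^sub>v n \<longrightarrow> ?Q x t"
    proof (cases "x \<in> carrier_vec n \<and> x \<noteq> 0\<^sub>v n")
      case True
      then obtain u where u: "u \<in> V" "mat_image n u = {c \<cdot>\<^sub>v x | c. True}" "mat_trace u = 0"
        using nog unfolding good_vector_def by blast
      obtain f where f: "f\<in>carrier_vec n" "\<forall>v\<in>carrier_vec n. u *\<^sub>v v = (f \<bullet> v) \<cdot>\<^sub>v x" "f \<bullet> x = 0"
        "\<exists>y\<in>carrier_vec n. f \<bullet> y = 1"
        using decomp[of u n x] u VC True by blast
      then obtain y where "y \<in> carrier_vec n" "f \<bullet> y = 1" by blast
      then show ?thesis using f u by (intro exI[of _ "(u, f, y)"]) auto
    qed auto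
  qed
  from choice[OF this] obtain T where T0: "\<forall>x. x \<in> carrier_vec n \<and> x \<noteq> 0\<^sub>v n \<longrightarrow> ?Q x (T x)"
    by blast
  have T: "?Q x (T x)" if "x \<in> carrier_vec n" "x \<noteq> 0\<^sub>v n" for x
    using T0 that by blast
  define U where "U x = fst (T x)" for x
  define F where "F x = fst (snd (T x))" for x
  define Y where "Y x = snd (snd (T x))" for x
  have UV: "U x \<in> V" and Fc: "F x \<in> carrier_vec n" and Yc: "Y x \<in> carrier_vec n"
    and Ueq: "\<forall>v\<in>carrier_vec n. U x *\<^sub>v v = (F x \<bullet> v) \<cdot>\<^sub>v x"
    and Fx: "F x \<bullet> x = 0" and FY: "F x \<bullet> Y x = 1"
    if "x \<in> carrier_vec n" "x \<noteq> 0\<^sub>v n" for x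
    using T[OF that] unfolding U_def F_def Y_def by auto
  have strong: "F x \<bullet> y = 0 \<or> F y \<bullet> x = 0"
    if "x \<in> carrier_vec n" "x \<noteq> 0\<^sub>v n" "y \<in> carrier_vec n" "y \<noteq> 0\<^sub>v n" for x y
  proof (rule ccontr)
    assume "\<not> ?thesis"
    then show False
      using pair[OF char V hyp that(1) that(3) Fc[OF that(1,2)] Fc[OF that(3,4)]
          UV[OF that(1,2)] UV[OF that(3,4)] Ueq[OF that(1,2)] Ueq[OF that(3,4)]
          Fx[OF that(1,2)] Fx[OF that(3,4)]] by blast
  qed
  let ?I = "\<lambda>k xs. (\<forall>i\<le>k. xs i \<in> carrier_vec n \<and> xs i \<noteq> 0\<^sub>v n)
     \<and> (\<forall>i\<le>k. \<forall>j\<le>i. F (xs i) \<bullet> xs j = 0) \<and> (\<forall>i<k. F (xs i) \<bullet> xs (Suc i) = 1)"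
  have chain: "\<exists>xs. ?I k xs" for k
  proof (induction k)
    case 0
    have "unit_vec n 0 \<noteq> (0\<^sub>v n :: 'a vec)" using n2 by (intro unit_vec_nonzero) auto
    then show ?case using Fx[of "unit_vec n 0"]
      by (intro exI[of _ "\<lambda>_. unit_vec n 0"]) auto
  next
    case (Suc k)
    then obtain xs where I: "?I k xs" by blast
    have "\<exists>v\<in>carrier_vec n. \<forall>i\<le>k. F (xs i) \<bullet> v = 1"
      by (rule down[of k "\<lambda>i. F (xs i)" n xs "Y (xs k)"]) (use I Fc Yc FY in auto)
    then obtain v where v: "v \<in> carrier_vec n" "\<forall>i\<le>k. F (xs i) \<bullet> v = 1" by blast
    have vn: "v \<noteq> 0\<^sub>v n"
    proof
      assume "v = 0\<^sub>v n"
      then have "F (xs 0) \<bullet> v = 0" using Fc I by simp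
      then show False using v by simp
    qed
    define xs' where "xs' = xs(Suc k := v)"
    have A: "\<forall>i\<le>Suc k. xs' i \<in> carrier_vec n \<and> xs' i \<noteq> 0\<^sub>v n"
      using I v vn unfolding xs'_def by (auto simp: le_Suc_eq)
    have B: "\<forall>i\<le>Suc k. \<forall>j\<le>i. F (xs' i) \<bullet> xs' j = 0"
    proof (intro allI impI)
      fix i j assume ij: "i \<le> Suc k" "j \<le> i"
      show "F (xs' i) \<bullet> xs' j = 0"
      proof (cases "i = Suc k")
        case True
        show ?thesis
        proof (cases "j = Suc k")
          case True
          then show ?thesis using \<open>i = Suc k\<close> Fx[OF v(1) vn] unfolding xs'_def by simp
        next
          case False
          then have j: "j \<le> k" using ij by simp
          have "F (xs j) \<bullet> v \<noteq> 0" using v j by simp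
          then have "F v \<bullet> xs j = 0" using strong[of "xs j" v] I j v vn by auto
          then show ?thesis using True False unfolding xs'_def by simp
        qed
      next
        case False
        then show ?thesis using ij I unfolding xs'_def by simp
      qed
    qed
    have C: "\<forall>i<Suc k. F (xs' i) \<bullet> xs' (Suc i) = 1"
      using I v unfolding xs'_def by (auto simp: less_Suc_eq)
    show ?case using A B C by blast
  qed
  obtain xs where I: "?I (n - 1) xs" using chain by blast
  show False
  proof (rule chain_contra[of n "\<lambda>i. F (xs i)" xs])
    show "1 \<le> n" using n2 by simp
    show "\<forall>i<n. F (xs i) \<in> carrier_vec n" using I Fc by auto
    show "\<forall>i<n. xs i \<in> carrier_vec n" using I by auto
    show "xs 0 \<noteq> 0\<^sub>v n" using I by auto
    show "\<forall>i<n. \<forall>j\<le>i. F (xs i) \<bullet> xs j = 0" using I by auto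
    show "\<forall>i. Suc i < n \<longrightarrow> F (xs i) \<bullet> xs (Suc i) = 1" using I by auto
    show "\<forall>i<n. \<exists>w\<in>carrier_vec n. F (xs i) \<bullet> w = 1"
    proof (intro allI impI)
      fix i assume "i < n"
      then have "xs i \<in> carrier_vec n" "xs i \<noteq> 0\<^sub>v n" using I by auto
      then show "\<exists>w\<in>carrier_vec n. F (xs i) \<bullet> w = 1" using Yc FY by blast
    qed
  qed
qed
end
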